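(* Let $p\geq 3$ be a prime, $u\in\{2,\ldots,p-1\}$ and $s$ a positive integer. Then $$\nu_{p}\big(A_{p,(p-1)(up^s-1)}(n)\big)=1$$ for infinitely many $n\in\mathbb{N}$.
   Context: For an integer $m\geq 2$ and a positive integer $k$, the integers $A_{m,k}(n)$, $n\in\mathbb{N}=\{0,1,2,\ldots\}$, are defined by the formal power series identity $\prod_{i=0}^{\infty}\big(1-x^{m^{i}}\big)^{-k}=\sum_{n=0}^{\infty}A_{m,k}(n)x^{n}$. For a prime $p$, $\nu_p(n)$ denotes the $p$-adic valuation of the integer $n$, with $\nu_p(0)=+\infty$. *)

theory Defs
  imports "HOL-Computational_Algebra.Computational_Algebra"
begin

text \<open>The power series (1 - x^a)^(-1) = sum_j x^(a j), with integer coefficients.\<close>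
definition geom_fps :: "nat \<Rightarrow> int fps" where
  "geom_fps a = Abs_fps (\<lambda>j. if a dvd j then 1 else 0)"

text \<open>A_{m,k}(n): coefficient of x^n in prod_{i>=0} (1 - x^(m^i))^(-k).
  Factors with m^i > n are 1 + O(x^(n+1)) and do not affect the n-th coefficient,
  so the product over i \<le> n suffices (m^i > n for i > n since m \<ge> 2).\<close>
definition A :: "nat \<Rightarrow> nat \<Rightarrow> nat \<Rightarrow> int" where
  "A m k n = fps_nth ((\<Prod>i\<le>n. geom_fps (m ^ i)) ^ k) n"

end

theory Submission
  imports Defs
begin


definition pc :: "int \<Rightarrow> int poly \<Rightarrow> int poly \<Rightarrow> bool" where
  "pc q F G \<longleftrightarrow> [:q:] dvd (F - G)"

lemma const_dvd_smult: "[:c:] dvd smult c (D::int poly)" unfolding const_poly_dvd_iff by simp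

lemma pc_iff: "pc q F G \<longleftrightarrow> (\<forall>n. q dvd coeff F n - coeff G n)"
  unfolding pc_def by (simp add: const_poly_dvd_iff)

lemma pc_refl[simp]: "pc q F F" by (simp add: pc_def)
lemma pc_sym: "pc q F G \<Longrightarrow> pc q G F"
proof -
  assume a: "pc q F G"
  have e: "G - F = - (F - G)" by simp
  show ?thesis using a unfolding pc_def e dvd_minus_iff .
qed
lemma pc_trans: "pc q F G \<Longrightarrow> pc q G H \<Longrightarrow> pc q F H"
proof -
  assume a: "pc q F G" "pc q G H"
  have e: "F - H = (F - G) + (G - H)" by simp
  show ?thesis using a unfolding pc_def e by (rule dvd_add)
qed
lemma pc_add: "pc q F G \<Longrightarrow> pc q F' G' \<Longrightarrow> pc q (F + F') (G + G')"
proof -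
  assume a: "pc q F G" "pc q F' G'"
  have e: "(F + F') - (G + G') = (F - G) + (F' - G')" by simp
  show ?thesis using a unfolding pc_def e by (rule dvd_add)
qed
lemma pc_diff: "pc q F G \<Longrightarrow> pc q F' G' \<Longrightarrow> pc q (F - F') (G - G')"
proof -
  assume a: "pc q F G" "pc q F' G'"
  have e: "F - F' - (G - G') = (F - G) - (F' - G')" by (simp add: algebra_simps)
  show ?thesis using a unfolding pc_def e by (rule dvd_diff)
qed
lemma pc_mult: "pc q F G \<Longrightarrow> pc q F' G' \<Longrightarrow> pc q (F * F') (G * G')"
proof -
  assume a: "pc q F G" "pc q F' G'"
  have "F * F' - G * G' = (F - G) * F' + G * (F' - G')" by (simp add: algebra_simps)
  then show ?thesis using a unfolding pc_def by (simp add: dvd_add dvd_mult2 dvd_mult)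
qed
lemma pc_power: "pc q F G \<Longrightarrow> pc q (F ^ n) (G ^ n)"
  by (induction n) (auto intro: pc_mult)
lemma pc_coeff: "pc q F G \<Longrightarrow> q dvd coeff F n - coeff G n"
  by (simp add: pc_iff)
lemma pc_pcompose_left: "pc q F G \<Longrightarrow> pc q (pcompose F H) (pcompose G H)"
proof -
  assume "pc q F G"
  then obtain D where D: "F - G = [:q:] * D" unfolding pc_def by (elim dvdE)
  have "pcompose F H - pcompose G H = [:q:] * pcompose D H"
    by (simp add: pcompose_diff[symmetric] D pcompose_mult pcompose_smult)
  then show ?thesis unfolding pc_def by (simp add: const_dvd_smult)
qed
lemma pc_pcompose_right: "pc q V W \<Longrightarrow> pc q (pcompose F V) (pcompose F W)"
proof (induction F)
  case 0 then show ?case by simp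
next
  case (pCons a F)
  then show ?case unfolding pcompose_pCons
    by (intro pc_add[OF pc_refl] pc_mult[OF pCons.prems]) (rule pCons.IH[OF pCons.prems])
qed
lemma pc_mono: "pc (q * r) F G \<Longrightarrow> pc q F G"
proof -
  assume a: "pc (q * r) F G"
  have "[:q:] dvd [:q * r:]" by simp
  then show ?thesis using a unfolding pc_def by (rule dvd_trans)
qed
lemma pc_lift: "pc q F G \<Longrightarrow> pc (q * r) (smult r F) (smult r G)"
proof -
  assume a: "pc q F G"
  show ?thesis unfolding pc_iff
  proof
    fix n
    have "q dvd coeff F n - coeff G n" using a pc_iff by blast
    then have "q * r dvd (coeff F n - coeff G n) * r" by (rule mult_dvd_mono) simp
    then show "q * r dvd coeff (smult r F) n - coeff (smult r G) n" by (simp add: algebra_simps)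
  qed
qed
lemma pc_smult_dvd: "pc q (smult q F) 0"
  unfolding pc_iff by simp
lemma of_int_poly_eq: "(of_int q :: int poly) = [:q:]"
  by (simp add: of_int_poly)
lemma binom_aux:
  fixes a b Q N x :: "'a::comm_ring_1"
  shows "(a*x + Q*N*b*x)*(a+Q*b) = a*(a*x) + Q*(1+N)*b*(a*x) + Q*Q*(N*b*b*x)"
  by (simp add: algebra_simps)
lemma h3: "pc (q^2) (X + of_int q * of_int q * Y) X"
proof -
  have e: "X + of_int q * of_int q * Y - X = smult (q^2) Y" by (simp add: of_int_poly_eq power2_eq_square)
  show ?thesis unfolding pc_def e by (rule const_dvd_smult)
qed
lemma pc_binom:
  fixes a b :: "int poly"
  shows "pc (q^2) ((a + of_int q * b)^(Suc n)) (a^(Suc n) + of_int q * of_nat (Suc n) * b * a^n)"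
proof (induction n)
  case 0 then show ?case by simp
next
  case (Suc n)
  have h1: "pc (q^2) ((a + of_int q * b)^(Suc n) * (a + of_int q * b))
           ((a^(Suc n) + of_int q * of_nat (Suc n) * b * a^n) * (a + of_int q * b))"
    by (rule pc_mult[OF Suc pc_refl])
  have h2: "(a^(Suc n) + of_int q * of_nat (Suc n) * b * a^n) * (a + of_int q * b)
     = a * (a * a^n) + of_int q * (1 + of_nat (Suc n)) * b * (a * a^n) + of_int q * of_int q * (of_nat (Suc n) * b * b * a ^ n)"
    unfolding power_Suc by (rule binom_aux)
  have h4: "pc (q^2) ((a + of_int q * b)^(Suc n) * (a + of_int q * b))
      (a * (a * a^n) + of_int q * (1 + of_nat (Suc n)) * b * (a * a^n))"
    using pc_trans[OF h1[unfolded h2] h3] .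
  have e: "(a + of_int q * b)^(Suc (Suc n)) = (a + of_int q * b)^(Suc n) * (a + of_int q * b)"
    by (rule power_Suc2)
  have e2: "a ^ Suc (Suc n) + of_int q * of_nat (Suc (Suc n)) * b * a ^ Suc n
     = a * (a * a^n) + of_int q * (1 + of_nat (Suc n)) * b * (a * a^n)"
    by (simp only: of_nat_Suc[of "Suc n"] power_Suc)
  show ?case unfolding e e2 by (rule h4)
qed


definition PP :: "nat \<Rightarrow> nat \<Rightarrow> int fps" where
  "PP p N = (\<Prod>i\<le>N. geom_fps (p ^ i))"

definition agree :: "nat \<Rightarrow> int fps \<Rightarrow> int fps \<Rightarrow> bool" where
  "agree n F G \<longleftrightarrow> (\<forall>i\<le>n. F $ i = G $ i)"

lemma agree_mult: "agree n F G \<Longrightarrow> agree n F' G' \<Longrightarrow> agree n (F * F') (G * G')"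
  unfolding agree_def fps_mult_nth by (auto intro!: sum.cong)

lemma agree_power: assumes "agree n F G" shows "agree n (F ^ k) (G ^ k)"
proof (induction k)
  case 0 then show ?case by (simp add: agree_def)
next
  case (Suc k) then show ?case using agree_mult[OF assms Suc.IH] by simp
qed

lemma geom_nth: "geom_fps a $ j = (if a dvd j then 1 else 0)"
  by (simp add: geom_fps_def)

lemma agree_geom: "n < a \<Longrightarrow> agree n (geom_fps a) 1"
  unfolding agree_def geom_nth
  by (auto simp: dvd_imp_le) (metis dvd_imp_le le_less_trans less_irrefl neq0_conv)

lemma PP_Suc: "PP p (Suc N) = PP p N * geom_fps (p ^ Suc N)"
  by (simp add: PP_def)

lemma agree_PP:
  assumes "p \<ge> 2" "n \<le> N"
  shows "agree n (PP p N) (PP p n)"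
  using assms(2)
proof (induction N rule: dec_induct)
  case base then show ?case by (simp add: agree_def)
next
  case (step N)
  have "Suc N < 2 ^ Suc N" by (rule less_exp)
  also have "\<dots> \<le> p ^ Suc N" using assms(1) by (intro power_mono) auto
  finally have "n < p ^ Suc N" using step by simp
  then have "agree n (PP p N * geom_fps (p ^ Suc N)) (PP p n * 1)"
    using step by (intro agree_mult agree_geom)
  then show ?case by (simp add: PP_Suc)
qed

lemma A_PP: "p \<ge> 2 \<Longrightarrow> j \<le> N \<Longrightarrow> (PP p N ^ k) $ j = A p k j"
  using agree_power[OF agree_PP, of p j N k] unfolding agree_def A_def PP_def by simp

lemma comp_nth:
  assumes "p > 0"
  shows "(F oo fps_X ^ p) $ n = (if p dvd n then F $ (n div p) else (0::int))"
proof -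
  have "(F oo fps_X ^ p) $ n = (\<Sum>i=0..n. F $ i * (fps_X ^ (p * i)) $ n)"
    by (simp add: fps_compose_nth power_mult)
  also have "\<dots> = (\<Sum>i=0..n. if n div p = i \<and> p dvd n then F $ i else 0)"
    using assms by (intro sum.cong) auto
  also have "\<dots> = (if p dvd n then F $ (n div p) else 0)"
    using assms by (cases "p dvd n") (auto simp: sum.delta div_le_dividend)
  finally show ?thesis .
qed

lemma dvd_mult_div_iff: "(p::nat) > 0 \<Longrightarrow> (p * a dvd n) = (p dvd n \<and> a dvd n div p)"
  by (metis dvd_div_iff_mult dvd_mult_left mult.commute nat_mult_dvd_cancel_disj dvd_mult_div_cancel neq0_conv)

lemma geom_comp: "p > 0 \<Longrightarrow> geom_fps (p ^ i) oo fps_X ^ p = geom_fps (p ^ Suc i)"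
  by (rule fps_ext) (auto simp: comp_nth geom_nth dvd_mult_div_iff)

lemma geom1: "geom_fps 1 * (1 - fps_X) = 1"
proof (rule fps_ext)
  fix n
  show "(geom_fps 1 * (1 - fps_X)) $ n = (1::int fps) $ n"
    by (simp add: algebra_simps geom_nth mult.commute[of _ fps_X])
qed

lemma PP_Suc': "p > 0 \<Longrightarrow> PP p (Suc N) = geom_fps 1 * (PP p N oo fps_X ^ p)"
proof -
  assume p: "p > 0"
  have "PP p (Suc N) = geom_fps (p ^ 0) * (\<Prod>i\<le>N. geom_fps (p ^ Suc i))"
    unfolding PP_def by (rule prod.atMost_Suc_shift)
  also have "(\<Prod>i\<le>N. geom_fps (p ^ Suc i)) = (\<Prod>i\<le>N. geom_fps (p ^ i) oo fps_X ^ p)"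
    using p by (simp add: geom_comp)
  also have "\<dots> = PP p N oo fps_X ^ p"
    unfolding PP_def using p by (intro fps_compose_prod_distrib[symmetric]) simp
  finally show ?thesis by simp
qed

definition TT :: "int poly" where "TT = [:1, -1:]"

lemma fps_TT: "fps_of_poly TT = 1 - fps_X"
  by (simp add: TT_def fps_of_poly_pCons fps_const_neg)

lemma recurrence:
  assumes "p \<ge> 2"
  shows "(\<Sum>i\<le>n. A p k i * coeff (TT ^ k) (n - i)) = (if p dvd n then A p k (n div p) else 0)"
proof -
  have p0: "p > 0" using assms by simp
  have "(PP p (Suc n) ^ k * fps_of_poly (TT ^ k)) = (geom_fps 1 * (1 - fps_X)) ^ k * (PP p n oo fps_X ^ p) ^ k"
    by (simp add: PP_Suc'[OF p0] fps_of_poly_power fps_TT power_mult_distrib mult_ac)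
  also have "\<dots> = PP p n ^ k oo fps_X ^ p"
    unfolding geom1 power_one mult_1_left using fps_compose_power[of "fps_X ^ p" "PP p n" k] p0 by simp
  finally have e: "PP p (Suc n) ^ k * fps_of_poly (TT ^ k) = PP p n ^ k oo fps_X ^ p" .
  have "(\<Sum>i\<le>n. A p k i * coeff (TT ^ k) (n - i)) = (PP p (Suc n) ^ k * fps_of_poly (TT ^ k)) $ n"
    unfolding fps_mult_nth using assms by (auto simp: A_PP atLeast0AtMost intro!: sum.cong)
  also have "\<dots> = (if p dvd n then A p k (n div p) else 0)"
    unfolding e comp_nth[OF p0] using assms by (auto simp: A_PP div_le_dividend)
  finally show ?thesis .
qed



lemma nonneg_mult: "(\<forall>i. F $ i \<ge> (0::int)) \<Longrightarrow> (\<forall>i. G $ i \<ge> 0) \<Longrightarrow> \<forall>i. (F * G) $ i \<ge> 0"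
  unfolding fps_mult_nth by (auto intro!: sum_nonneg)

lemma ge1_mult:
  assumes "\<forall>i. F $ i \<ge> (0::int)" "\<forall>i. G $ i \<ge> 0" "F $ n \<ge> 1" "G $ 0 \<ge> 1"
  shows "(F * G) $ n \<ge> 1"
proof -
  have "F $ n * G $ (n - n) \<le> (\<Sum>i=0..n. F $ i * G $ (n - i))"
    by (rule member_le_sum[of n, where f = "\<lambda>i. F $ i * G $ (n - i)"]) (use assms in auto)
  moreover have "1 \<le> F $ n * G $ 0" using assms(3,4)
    by (metis mult_mono mult_1 zero_le_one order_trans)
  ultimately show ?thesis unfolding fps_mult_nth by simp
qed

lemma PP_pos: "\<forall>j. (PP p N) $ j \<ge> 1"
proof (induction N)
  case 0 then show ?case by (simp add: PP_def geom_nth)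
next
  case (Suc N)
  have "(PP p N * geom_fps (p ^ Suc N)) $ j \<ge> 1" for j
    using Suc by (intro ge1_mult) (auto simp: geom_nth order_trans[OF zero_le_one])
  then show ?case by (simp add: PP_Suc)
qed

lemma PP_power_nonneg: "\<forall>j. (PP p N ^ k) $ j \<ge> 0"
proof (induction k)
  case 0 then show ?case by simp
next
  case (Suc k)
  have "\<forall>j. (PP p N) $ j \<ge> 0" using PP_pos[of p N] by (auto intro: order_trans[OF zero_le_one])
  then show ?case using nonneg_mult[OF _ Suc] by simp
qed

lemma PP_power_pos: "k \<ge> 1 \<Longrightarrow> (PP p N ^ k) $ j \<ge> 1"
proof (induction k rule: dec_induct)
  case base then show ?case using PP_pos by simp
next
  case (step k)
  have "(PP p N ^ k * PP p N) $ j \<ge> 1"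
    using step PP_power_nonneg[of p N k] PP_pos[of p N]
    by (intro ge1_mult) (auto intro: order_trans[OF zero_le_one])
  then show ?case by (simp add: mult.commute)
qed

lemma A_pos: "p \<ge> 2 \<Longrightarrow> k \<ge> 1 \<Longrightarrow> A p k n \<ge> 1"
  using A_PP[of p n n k] PP_power_pos[of k p n n] by simp

lemma A_zero: "p \<ge> 2 \<Longrightarrow> A p k 0 = 1"
proof -
  assume "p \<ge> 2"
  have "(PP p 0) $ 0 = 1" by (simp add: PP_def geom_nth)
  then have "(PP p 0 ^ k) $ 0 = 1" by (simp add: fps_power_zeroth)
  then show ?thesis using A_PP[of p 0 0 k] \<open>p \<ge> 2\<close> by simp
qed

lemma coeff_TT_power: "coeff (TT ^ n) j = (-1) ^ j * of_nat (n choose j)"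
proof (induction n arbitrary: j)
  case 0 then show ?case by (cases j) auto
next
  case (Suc n)
  have e: "TT ^ Suc n = TT ^ n + pCons 0 (- (TT ^ n))"
    by (simp add: TT_def)
  show ?case
  proof (cases j)
    case 0 then show ?thesis unfolding e using Suc by simp
  next
    case (Suc j')
    then show ?thesis unfolding e using Suc.IH by (simp add: algebra_simps)
  qed
qed

lemma pcompose_power_left: "pcompose (F ^ n) G = (pcompose F G) ^ n"
  by (induction n) (simp_all add: pcompose_mult pcompose_1)

lemma coeff_pcompose_monom:
  fixes F :: "int poly"
  assumes "p > 0"
  shows "coeff (pcompose F (monom 1 p)) n = (if p dvd n then coeff F (n div p) else 0)"
proof -
  have "coeff (pcompose F (monom 1 p)) n = fps_of_poly (pcompose F (monom 1 p)) $ n" by simp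
  also have "\<dots> = (fps_of_poly F oo fps_X ^ p) $ n"
    using assms by (subst fps_of_poly_pcompose) (simp_all add: coeff_monom fps_of_poly_monom')
  also have "\<dots> = (if p dvd n then coeff F (n div p) else 0)"
    using assms by (simp add: comp_nth)
  finally show ?thesis .
qed

lemma pcompose_TT_monom: "pcompose TT (monom 1 p) = 1 - monom 1 p"
  by (simp add: TT_def pcompose_pCons)

lemma V_decomp:
  assumes "prime p" "odd p"
  shows "\<exists>W. 1 - TT ^ p = monom 1 p + smult (int p) W \<and> coeff W 0 = 0 \<and> coeff W 1 = 1"
proof -
  have p1: "p > 1" using assms prime_gt_1_nat by blast
  define D where "D = 1 - TT ^ p - monom 1 p"
  have cD: "coeff D j = (if j = 0 then 1 else 0) - (-1) ^ j * of_nat (p choose j) - (if j = p then 1 else 0)" for j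
    by (simp add: D_def coeff_TT_power coeff_monom coeff_1)
  have "int p dvd coeff D j" for j
  proof -
    consider "j = 0" | "j = p" | "0 < j \<and> j < p" | "j > p" by linarith
    then show ?thesis
    proof cases
      case 1 then show ?thesis using p1 by (simp add: cD)
    next
      case 2 then show ?thesis using assms by (simp add: cD)
    next
      case 3
      then have "p dvd (p choose j)" using assms by (intro dvd_choose_prime) auto
      then have "int p dvd of_nat (p choose j)" by (simp add: int_dvd_int_iff)
      then show ?thesis using 3 by (simp add: cD)
    next
      case 4 then show ?thesis by (simp add: cD binomial_eq_0)
    qed
  qed
  then have "[:int p:] dvd D" by (simp add: const_poly_dvd_iff)
  then obtain W where W: "D = [:int p:] * W" by (elim dvdE)
  then have DW: "D = smult (int p) W" by simp
  have c: "coeff D j = int p * coeff W j" for j by (simp add: DW)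
  have "coeff W 0 = 0" using c[of 0] cD[of 0] p1 by simp
  moreover have "coeff W 1 = 1" using c[of 1] cD[of 1] p1 by simp
  moreover have "1 - TT ^ p = monom 1 p + smult (int p) W" using D_def DW by (simp add: algebra_simps)
  ultimately show ?thesis by blast
qed



lemma TTp_modp:
  assumes "prime p" "odd p"
  shows "pc (int p) (TT ^ p) (1 - monom 1 p)"
proof -
  obtain W where W: "1 - TT ^ p = monom 1 p + smult (int p) W" using V_decomp[OF assms] by blast
  then have "TT ^ p - (1 - monom 1 p) = smult (int p) (- W)" by (simp add: algebra_simps)
  then show ?thesis unfolding pc_def by (simp only: const_dvd_smult)
qed

lemma dvd_aux:
  fixes q x S I :: int
  assumes "q dvd S" "q dvd I" "q dvd (x + S) - I"
  shows "q dvd x"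
proof -
  have e: "((x + S) - I) - S + I = x" by simp
  have "q dvd ((x + S) - I) - S + I" by (rule dvd_add[OF dvd_diff[OF assms(3) assms(1)] assms(2)])
  then show ?thesis by (simp only: e)
qed

lemma modp:
  assumes "prime p" "odd p" "k = (p - 1) * m"
  shows "int p dvd A p k n - coeff (TT ^ m) n"
proof -
  have p2: "p \<ge> 2" using assms prime_ge_2_nat by blast
  have brec: "int p dvd (\<Sum>i\<le>n. coeff (TT ^ m) i * coeff (TT ^ k) (n - i))
      - (if p dvd n then coeff (TT ^ m) (n div p) else 0)" for n
  proof -
    have "pc (int p) ((TT ^ p) ^ m) ((1 - monom 1 p) ^ m)"
      by (rule pc_power[OF TTp_modp[OF assms(1,2)]])
    moreover have "(1 - monom 1 p) ^ m = pcompose (TT ^ m) (monom 1 p)"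
      by (simp add: pcompose_power_left pcompose_TT_monom)
    moreover have "(TT ^ p) ^ m = TT ^ m * TT ^ k"
    proof -
      have "m + k = p * m" using assms(3) p2 by (simp add: algebra_simps)
      then show ?thesis by (simp add: power_add[symmetric] power_mult[symmetric])
    qed
    ultimately have "pc (int p) (TT ^ m * TT ^ k) (pcompose (TT ^ m) (monom 1 p))" by simp
    then have "int p dvd coeff (TT ^ m * TT ^ k) n - coeff (pcompose (TT ^ m) (monom 1 p)) n"
      by (rule pc_coeff)
    then show ?thesis using p2 by (simp add: coeff_mult coeff_pcompose_monom)
  qed
  define d where "d i = A p k i - coeff (TT ^ m) i" for i
  have c0: "coeff (TT ^ k) 0 = 1" by (simp add: coeff_TT_power)
  have drec: "int p dvd (\<Sum>i\<le>n. d i * coeff (TT ^ k) (n - i)) - (if p dvd n then d (n div p) else 0)" for n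
  proof -
    have "(\<Sum>i\<le>n. d i * coeff (TT ^ k) (n - i)) - (if p dvd n then d (n div p) else 0)
      = ((\<Sum>i\<le>n. A p k i * coeff (TT ^ k) (n - i)) - (if p dvd n then A p k (n div p) else 0))
        - ((\<Sum>i\<le>n. coeff (TT ^ m) i * coeff (TT ^ k) (n - i)) - (if p dvd n then coeff (TT ^ m) (n div p) else 0))"
      by (simp add: d_def algebra_simps sum_subtractf)
    also have "(\<Sum>i\<le>n. A p k i * coeff (TT ^ k) (n - i)) - (if p dvd n then A p k (n div p) else 0) = 0"
      using recurrence[OF p2] by simp
    finally have e: "(\<Sum>i\<le>n. d i * coeff (TT ^ k) (n - i)) - (if p dvd n then d (n div p) else 0)
      = 0 - ((\<Sum>i\<le>n. coeff (TT ^ m) i * coeff (TT ^ k) (n - i)) - (if p dvd n then coeff (TT ^ m) (n div p) else 0))" .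
    show ?thesis unfolding e diff_0 dvd_minus_iff by (rule brec)
  qed
  have "int p dvd d n"
  proof (induction n rule: less_induct)
    case (less n)
    show ?case
    proof (cases "n = 0")
      case True
      then show ?thesis using A_zero[OF p2] by (simp add: d_def coeff_TT_power)
    next
      case False
      have s: "(\<Sum>i\<le>n. d i * coeff (TT ^ k) (n - i)) = d n + (\<Sum>i<n. d i * coeff (TT ^ k) (n - i))"
        by (simp add: lessThan_Suc_atMost[symmetric] c0)
      have "int p dvd (\<Sum>i<n. d i * coeff (TT ^ k) (n - i))"
        using less by (intro dvd_sum) simp
      moreover have "int p dvd (if p dvd n then d (n div p) else 0)"
        using less False p2 by auto
      moreover have "int p dvd (d n + (\<Sum>i<n. d i * coeff (TT ^ k) (n - i))) - (if p dvd n then d (n div p) else 0)"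
        using drec[of n] unfolding s .
      ultimately show ?thesis by (rule dvd_aux)
    qed
  qed
  then show ?thesis by (simp add: d_def)
qed



lemma dvd_aux2:
  fixes q a b :: int
  assumes "q dvd a" "q dvd a - b" shows "q dvd b"
proof -
  have e: "a - (a - b) = b" by simp
  show ?thesis using dvd_diff[OF assms] unfolding e .
qed

lemma pc_smult: "pc q F G \<Longrightarrow> pc q (smult c F) (smult c G)"
  using pc_mult[OF pc_refl[of q "[:c:]"], of F G] by simp

lemma pcompose_monom: "pcompose (monom c n) G = smult c (G ^ n)"
  by (simp add: monom_altdef pcompose_smult pcompose_power_left pcompose_pCons)

lemma of_int_mult_smult: "(of_int c :: int poly) * X = smult c X"
  by (simp add: of_int_poly_eq)

lemma coeff_mult_monom1: "coeff ((Q :: int poly) * monom 1 k) n = (if k \<le> n then coeff Q (n - k) else 0)"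
  by (simp add: mult.commute[of Q] coeff_monom_mult)

lemma Q_contra:
  fixes Q W :: "int poly"
  assumes pp: "prime p" "odd p" and mp: "m \<ge> p" "\<not> p dvd m" and kdef: "k = (p - 1) * m"
    and W0: "coeff W 0 = 0" and W1: "coeff W 1 = 1"
    and rel: "pc (int p ^ 2) (Q * monom 1 k) (pcompose Q (monom 1 p + smult (int p) W))"
    and Q1: "poly Q 1 = 1"
  shows False
proof -
  have p2: "p \<ge> 2" using pp prime_ge_2_nat by blast
  define a :: "int poly" where "a = monom 1 p"
  define q where "q j = coeff Q j" for j
  have sq: "int p ^ 2 = int p * int p" by (simp add: power2_eq_square)
  have Va: "pc (int p) (a + smult (int p) W) a"
    unfolding pc_def by (simp add: const_dvd_smult)
  have relp: "pc (int p) (Q * monom 1 k) (pcompose Q a)"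
    using pc_trans[OF pc_mono[OF rel[unfolded sq a_def[symmetric]]] pc_pcompose_right[OF Va]] .
  have cQa: "coeff (pcompose Q a) n = (if p dvd n then q (n div p) else 0)" for n
    using p2 by (simp add: a_def coeff_pcompose_monom q_def)
  have R1: "int p dvd (if k \<le> N then q (N - k) else 0) - (if p dvd N then q (N div p) else 0)" for N
    using pc_coeff[OF relp, of N] unfolding coeff_mult_monom1 cQa q_def[symmetric] .
  have kj: "p * j - k < j" if "j < m" "k \<le> p * j" for j
  proof -
    have "(p - 1) * j < (p - 1) * m" using that p2 by simp
    moreover have "p * j = j + (p - 1) * j" using p2 by (simp add: algebra_simps)
    ultimately show ?thesis using kdef that(2) by linarith
  qed
  have kj2: "p * j - k > j \<and> k \<le> p * j" if "j > m" for j
  proof -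
    have "(p - 1) * j > (p - 1) * m" using that p2 by simp
    moreover have "p * j = j + (p - 1) * j" using p2 by (simp add: algebra_simps)
    ultimately show ?thesis using kdef by linarith
  qed
  have pj: "p dvd p * j" "p * j div p = j" for j using p2 by auto
  have s1a: "int p dvd q j" if "j < m" for j
    using that
  proof (induction j rule: less_induct)
    case (less j)
    show ?case
    proof (cases "k \<le> p * j")
      case True
      have "int p dvd q (p * j - k)" using less kj[OF less.prems True] by simp
      moreover have "int p dvd q (p * j - k) - q j" using R1[of "p * j"] True pj by simp
      ultimately show ?thesis by (rule dvd_aux2)
    next
      case False
      then show ?thesis using R1[of "p * j"] pj by simp
    qed
  qed
  define D where "D = degree Q"
  have s1b: "int p dvd q j" if "j > m" for j
    using that
  proof (induction "Suc D - j" arbitrary: j rule: less_induct)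
    case (less j)
    show ?case
    proof (cases "j > D")
      case True then show ?thesis by (simp add: q_def D_def coeff_eq_0)
    next
      case False
      have kk: "p * j - k > j" "k \<le> p * j" using kj2[OF less.prems] by auto
      have "int p dvd q (p * j - k)"
      proof (cases "p * j - k > D")
        case True then show ?thesis by (simp add: q_def D_def coeff_eq_0)
      next
        case False2: False
        show ?thesis using less.hyps[of "p * j - k"] kk False2 False less.prems by simp
      qed
      moreover have "int p dvd q (p * j - k) - q j" using R1[of "p * j"] kk pj by simp
      ultimately show ?thesis by (rule dvd_aux2)
    qed
  qed
  have s1c: "\<not> int p dvd q m"
  proof
    assume h: "int p dvd q m"
    have all: "int p dvd q i" for i
      using s1a s1b h by (cases "i < m"; cases "i > m") (auto simp: not_less)
    have "poly Q 1 = (\<Sum>i\<le>degree Q. coeff Q i)" by (simp add: poly_altdef)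
    then have "int p dvd poly Q 1" using all by (simp add: q_def dvd_sum)
    then show False using Q1 p2 by simp
  qed
  have "[:int p:] dvd Q - monom (q m) m"
    unfolding const_poly_dvd_iff
  proof
    fix j
    show "int p dvd coeff (Q - monom (q m) m) j"
      using s1a s1b by (cases "j < m"; cases "j > m") (auto simp: q_def coeff_monom not_less)
  qed
  then obtain Q' where Q': "Q - monom (q m) m = [:int p:] * Q'" by (elim dvdE)
  have Qd: "Q = monom (q m) m + smult (int p) Q'" using Q' by (simp add: algebra_simps)
  have pcQ: "pcompose Q G = smult (q m) (G ^ m) + smult (int p) (pcompose Q' G)" for G
    by (subst Qd) (simp add: pcompose_add pcompose_smult pcompose_monom)
  obtain m' where m': "m = Suc m'" using mp p2 by (cases m) auto
  define E where "E = smult (q m) (of_int (int p) * of_nat m * W * a ^ m')"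
  have binom: "pc (int p ^ 2) ((a + of_int (int p) * W) ^ m) (a ^ m + of_int (int p) * of_nat m * W * a ^ m')"
    unfolding m' by (rule pc_binom)
  have rel2a: "pc (int p ^ 2) (pcompose Q (a + smult (int p) W))
      (smult (q m) (a ^ m + of_int (int p) * of_nat m * W * a ^ m') + smult (int p) (pcompose Q' a))"
    unfolding pcQ
  proof (rule pc_add)
    show "pc (int p ^ 2) (smult (q m) ((a + smult (int p) W) ^ m))
       (smult (q m) (a ^ m + of_int (int p) * of_nat m * W * a ^ m'))"
    proof -
      have sW: "smult (int p) W = of_int (int p) * W" by (simp only: of_int_mult_smult)
      show ?thesis unfolding sW by (rule pc_smult[OF binom])
    qed
    show "pc (int p ^ 2) (smult (int p) (pcompose Q' (a + smult (int p) W))) (smult (int p) (pcompose Q' a))"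
      unfolding sq by (rule pc_lift[OF pc_pcompose_right[OF Va]])
  qed
  have eq2: "smult (q m) (a ^ m + of_int (int p) * of_nat m * W * a ^ m') + smult (int p) (pcompose Q' a)
     = pcompose Q a + E"
    by (simp add: pcQ E_def smult_add_right)
  have rel2: "pc (int p ^ 2) (Q * monom 1 k) (pcompose Q a + E)"
    using pc_trans[OF rel[unfolded a_def[symmetric]] rel2a] unfolding eq2 .
  have cE: "coeff E N = q m * int p * int m * (if p * m' \<le> N then coeff W (N - p * m') else 0)" for N
  proof -
    have "E = smult (q m * int p * int m) (W * monom 1 (p * m'))"
      by (simp add: E_def a_def monom_power of_int_mult_smult of_nat_mult_conv_smult mult.assoc)
    then show ?thesis by (simp add: coeff_mult_monom1)
  qed
  have R2: "int p ^ 2 dvd (if k \<le> N then q (N - k) else 0) - ((if p dvd N then q (N div p) else 0) + coeff E N)" for N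
    using pc_coeff[OF rel2, of N] unfolding coeff_mult_monom1 coeff_add cQa q_def[symmetric] .
  have s2a: "int p ^ 2 dvd q j" if "j < m" for j
    using that
  proof (induction j rule: less_induct)
    case (less j)
    have cE0: "coeff E (p * j) = 0"
    proof (cases "p * m' \<le> p * j")
      case True
      then have "j = m'" using less.prems m' p2 by simp
      then show ?thesis using W0 by (simp add: cE)
    next
      case False then show ?thesis by (simp add: cE)
    qed
    show ?case
    proof (cases "k \<le> p * j")
      case True
      have "int p ^ 2 dvd q (p * j - k)" using less kj[OF less.prems True] by simp
      moreover have "int p ^ 2 dvd q (p * j - k) - q j" using R2[of "p * j"] True pj cE0 by simp
      ultimately show ?thesis by (rule dvd_aux2)
    next
      case False
      then show ?thesis using R2[of "p * j"] pj cE0 by simp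
    qed
  qed
  define N where "N = p * m' + 1"
  obtain p1 where p1: "p = Suc p1" using p2 by (cases p) auto
  have Nk: "N = k + (m - p1)" "m - p1 < m" "p1 \<le> m"
    using mp p2 unfolding N_def kdef m' p1 by (auto simp: algebra_simps)
  have ndvd: "\<not> p dvd N"
  proof
    assume "p dvd N"
    then have "p dvd (p * m' + 1) - p * m'" unfolding N_def by (rule dvd_diff_nat) simp
    then have "p dvd 1" by simp
    then show False using p2 by simp
  qed
  have c1: "(if k \<le> N then q (N - k) else 0) = q (m - p1)" using Nk by simp
  have c2: "(if p dvd N then q (N div p) else 0) = 0" using ndvd by simp
  have c3: "coeff E N = q m * int p * int m" using W1 by (simp add: cE N_def)
  have "int p ^ 2 dvd q (m - p1) - (0 + q m * int p * int m)"
    using R2[of N] unfolding c1 c2 c3 .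
  moreover have "int p ^ 2 dvd q (m - p1)" using s2a Nk by simp
  ultimately have "int p ^ 2 dvd 0 + q m * int p * int m" by (rule dvd_aux2[rotated])
  then have "int p ^ 2 dvd q m * int p * int m" by simp
  then have "int p * int p dvd int p * (q m * int m)" by (simp add: sq mult_ac)
  then have "int p dvd q m * int m" using p2 by simp
  then have "int p dvd q m \<or> int p dvd int m" using pp by (simp add: prime_dvd_mult_iff)
  then show False using s1c mp by (simp add: int_dvd_int_iff)
qed



lemma pcompose_TT_left: "pcompose TT G = 1 - G"
  by (simp add: TT_def pcompose_pCons)

lemma TT_TT: "pcompose TT TT = [:0, 1:]"
  unfolding pcompose_TT_left by (rule poly_eqI) (simp add: TT_def coeff_pCons split: nat.split)

lemma monom_TT: "pcompose (monom 1 n) TT = TT ^ n"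
  by (simp add: pcompose_monom)

theorem theorem3p1:
  fixes p u s :: nat
  assumes "prime p" and "p \<ge> 3" and "2 \<le> u" and "u \<le> p - 1" and "s \<ge> 1"
  shows "infinite {n :: nat. multiplicity (int p) (A p ((p - 1) * (u * p ^ s - 1)) n) = 1}"
proof
  define m where "m = u * p ^ s - 1"
  define k where "k = (p - 1) * m"
  define S where "S = {n :: nat. multiplicity (int p) (A p k n) = 1}"
  assume "finite {n :: nat. multiplicity (int p) (A p ((p - 1) * (u * p ^ s - 1)) n) = 1}"
  then have fin: "finite S" unfolding S_def k_def m_def .
  have p2: "p \<ge> 2" using assms by simp
  have oddp: "odd p" using assms by (simp add: prime_odd_nat)
  have "p ^ s \<ge> p" using assms p2 by (simp add: self_le_power)
  then have "u * p ^ s \<ge> 2 * p" using assms by (intro mult_mono) auto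
  then have mp: "m \<ge> p" unfolding m_def using p2 by linarith
  have mnd: "\<not> p dvd m"
  proof
    assume "p dvd m"
    moreover have "p dvd m + 1" unfolding m_def using assms \<open>u * p ^ s \<ge> 2 * p\<close> p2
      by (simp add: dvd_mult2 [of p "p ^ s" u])
    ultimately have "p dvd (m + 1) - m" by (intro dvd_diff_nat)
    then have "p dvd 1" by simp
    then show False using p2 by simp
  qed
  have k1: "k \<ge> 1" unfolding k_def using mp p2 by simp
  obtain B where B: "\<forall>n\<in>S. n < B" using fin finite_nat_set_iff_bounded by blast
  define N1 where "N1 = max B (m + 1)"
  have hyp: "int p ^ 2 dvd A p k n" if "n \<ge> N1" for n
  proof -
    have Apos: "A p k n \<ge> 1" using A_pos[OF p2 k1] .
    have "coeff (TT ^ m) n = 0" using that unfolding N1_def by (simp add: coeff_TT_power binomial_eq_0)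
    then have pd: "int p dvd A p k n" using modp[OF assms(1) oddp k_def, of n] by simp
    have "n \<notin> S" using B that unfolding N1_def by auto
    then have ne1: "multiplicity (int p) (A p k n) \<noteq> 1" unfolding S_def by simp
    have nz: "A p k n \<noteq> 0" using Apos by simp
    have nu: "\<not> is_unit (int p)" using p2 by simp
    have "int p ^ 1 dvd A p k n" using pd by simp
    then have "1 \<le> multiplicity (int p) (A p k n)"
      using power_dvd_iff_le_multiplicity[OF nz nu] by blast
    then have "2 \<le> multiplicity (int p) (A p k n)" using ne1 by linarith
    then show ?thesis by (rule multiplicity_dvd')
  qed
  define R :: "int poly" where "R = (\<Sum>n<N1. monom (A p k n) n)"
  have cR: "coeff R j = (if j < N1 then A p k j else 0)" for j
    unfolding R_def by (simp add: coeff_sum coeff_monom)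
  have Rc: "int p ^ 2 dvd coeff R j - A p k j" for j
    using hyp[of j] by (cases "j < N1") (auto simp: cR)
  have Rrel: "pc (int p ^ 2) (R * TT ^ k) (pcompose R (monom 1 p))"
    unfolding pc_iff
  proof
    fix n
    have e: "coeff (R * TT ^ k) n - coeff (pcompose R (monom 1 p)) n
      = (\<Sum>i\<le>n. (coeff R i - A p k i) * coeff (TT ^ k) (n - i))
        + ((\<Sum>i\<le>n. A p k i * coeff (TT ^ k) (n - i)) - (if p dvd n then A p k (n div p) else 0))
        - (if p dvd n then coeff R (n div p) - A p k (n div p) else 0)"
      using p2 by (simp add: coeff_mult coeff_pcompose_monom algebra_simps sum_subtractf)
    have z: "(\<Sum>i\<le>n. A p k i * coeff (TT ^ k) (n - i)) - (if p dvd n then A p k (n div p) else 0) = 0"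
      using recurrence[OF p2] by simp
    have d1: "int p ^ 2 dvd (\<Sum>i\<le>n. (coeff R i - A p k i) * coeff (TT ^ k) (n - i))"
      using Rc by (intro dvd_sum dvd_mult2) auto
    have d2: "int p ^ 2 dvd (if p dvd n then coeff R (n div p) - A p k (n div p) else 0)"
      using Rc by simp
    show "int p ^ 2 dvd coeff (R * TT ^ k) n - coeff (pcompose R (monom 1 p)) n"
      unfolding e z using d1 d2 by simp
  qed
  define Q where "Q = pcompose R TT"
  have RQ: "pcompose Q TT = R"
    unfolding Q_def by (simp add: pcompose_assoc[symmetric] TT_TT)
  have l: "pcompose (R * TT ^ k) TT = Q * monom 1 k"
    by (simp add: pcompose_mult pcompose_power_left TT_TT Q_def monom_altdef)
  have r: "pcompose (pcompose R (monom 1 p)) TT = pcompose Q (1 - TT ^ p)"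
  proof -
    have "pcompose (pcompose R (monom 1 p)) TT = pcompose R (TT ^ p)"
      by (simp add: pcompose_assoc[symmetric] monom_TT)
    also have "\<dots> = pcompose (pcompose Q TT) (TT ^ p)" by (simp add: RQ)
    also have "\<dots> = pcompose Q (1 - TT ^ p)"
      by (simp add: pcompose_assoc[symmetric] pcompose_TT_left)
    finally show ?thesis .
  qed
  have Qrel: "pc (int p ^ 2) (Q * monom 1 k) (pcompose Q (1 - TT ^ p))"
    using pc_pcompose_left[OF Rrel, of TT] unfolding l r .
  obtain W where W: "1 - TT ^ p = monom 1 p + smult (int p) W" "coeff W 0 = 0" "coeff W 1 = 1"
    using V_decomp[OF assms(1) oddp] by blast
  have N1pos: "0 < N1" unfolding N1_def by simp
  have Q1: "poly Q 1 = 1"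
    unfolding Q_def using N1pos A_zero[OF p2, of k]
    by (simp add: poly_pcompose TT_def poly_0_coeff_0 cR)
  show False
    using Q_contra[OF assms(1) oddp mp mnd k_def W(2) W(3) Qrel[unfolded W(1)] Q1] .
qed

end
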